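(* Let $1\le k<n$ and let $\varphi$ be an upper semi-continuous function on a bounded domain $U\times D\subset\mathbb{C}^{n-k}_{w'}\times\mathbb{C}^k_{w''}$. Assume that $\mathcal{I}(\varphi)=\mathcal{O}$. Then almost every $z''\in D$ has the following property: for every relatively compact open subset $V\Subset U$ and every nonnegative function $P\in C^0(\overline{V}\times D)$, \[ \int_V P(w',z'')e^{-\varphi(w',z'')}\,d\lambda_{n-k}(w')<+\infty \] and \[ \lim_{\varepsilon\to0}\frac{1}{\lambda_k(\mathbb{B}^k_{z''}(\varepsilon))}\int_{\mathbb{B}^k_{z''}(\varepsilon)}\int_V P(w',w'')\,\bigl|e^{-\varphi(w',w'')}-e^{-\varphi(w',z'')}\bigr|\,d\lambda_{n-k}(w')\,d\lambda_k(w'')=0. \]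
   Context: $\lambda_m$ is Lebesgue measure on $\mathbb{C}^m$, $\mathbb{B}^k_{z''}(\varepsilon)=\{w''\in\mathbb{C}^k:|w''-z''|<\varepsilon\}$. The multiplier ideal sheaf has stalks $\mathcal{I}(\varphi)_x=\{u\in\mathcal{O}_x:|u|^2e^{-\varphi}$ integrable on a neighborhood of $x\}$; $\mathcal{I}(\varphi)=\mathcal{O}$ means $e^{-\varphi}$ is locally integrable on $U\times D$. *)

theory Defs
  imports "HOL-Analysis.Analysis"
begin

text \<open>Upper semicontinuity of an extended-real valued function on a set S
  (values in [-infinity, +infinity) are required separately).\<close>
definition usc_on :: "'a::topological_space set \<Rightarrow> ('a \<Rightarrow> ereal) \<Rightarrow> bool" where
  "usc_on S f \<longleftrightarrow> (\<forall>x\<in>S. \<forall>c. f x < c \<longrightarrow> (\<forall>\<^sub>F y in at x within S. f y < c))"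

definition expneg :: "ereal \<Rightarrow> ennreal" where
  "expneg t = (if t = \<infinity> then 0 else if t = - \<infinity> then \<infinity> else ennreal (exp (- real_of_ereal t)))"

text \<open>|a - b| for values in [0, +infinity] (equals the usual value when both are finite,
  and +infinity when exactly one is infinite).\<close>
definition ediff :: "ennreal \<Rightarrow> ennreal \<Rightarrow> ennreal" where
  "ediff a b = (a - b) + (b - a)"

definition rel_compact_open :: "'a::metric_space set \<Rightarrow> 'a set \<Rightarrow> bool" where
  "rel_compact_open V U \<longleftrightarrow> open V \<and> compact (closure V) \<and> closure V \<subseteq> U"

text \<open>Multiplier ideal sheaf is trivial (I(phi) = O): e^{-phi} is locally integrable on S.\<close>
definition multiplier_ideal_trivial :: "'a::euclidean_space set \<Rightarrow> ('a \<Rightarrow> ereal) \<Rightarrow> bool" where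
  "multiplier_ideal_trivial S \<phi> \<longleftrightarrow>
     (\<forall>x\<in>S. \<exists>N. open N \<and> x \<in> N \<and> N \<subseteq> S \<and>
        (\<integral>\<^sup>+ y. indicator N y * expneg (\<phi> y) \<partial>lborel) < \<infinity>)"

end

theory Submission
  imports Defs
begin

lemma pred_ball[measurable]: "Measurable.pred borel (\<lambda>x::'a::metric_space. x \<in> ball a b)"
  by (rule pred_sets2[where N=borel and f="\<lambda>x. x"]) auto

lemma pred_cball[measurable]: "Measurable.pred borel (\<lambda>x::'a::metric_space. x \<in> cball a b)"
  by (rule pred_sets2[where N=borel and f="\<lambda>x. x"]) auto

lemma ball_lborel_conv:
  fixes c :: "'a::euclidean_space"
  assumes "r \<ge> 0"
  shows "emeasure lborel (ball c r) = ennreal (r ^ DIM('a) * measure lborel (ball (0::'a) 1))"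
proof -
  have "emeasure lborel (ball c r) = ennreal (measure lborel (ball c r))"
    using emeasure_lborel_ball_finite[of c r] by (intro emeasure_eq_ennreal_measure) auto
  then show ?thesis using content_ball_conv_unit_ball[OF assms, of c] by simp
qed

lemma ball_lborel_pos:
  fixes c :: "'a::euclidean_space"
  assumes "r > 0"
  shows "0 < emeasure lborel (ball c r)" "emeasure lborel (ball c r) < \<infinity>"
  using ball_lborel_conv[of r c] assms content_ball_pos[of 1 "0::'a"]
  by (auto simp: emeasure_lborel_ball_finite)

lemma le_nn_integral_count_space:
  assumes "j \<in> C"
  shows "f j \<le> (\<integral>\<^sup>+ i. f i \<partial>count_space C)"
proof -
  have "(\<integral>\<^sup>+ i. f i * indicator {j} i \<partial>count_space C) = f j * emeasure (count_space C) {j}"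
    using assms by (intro nn_integral_indicator_singleton) auto
  also have "\<dots> = f j" using assms by (simp add: emeasure_count_space)
  finally have "f j = (\<integral>\<^sup>+ i. f i * indicator {j} i \<partial>count_space C)" by simp
  also have "\<dots> \<le> (\<integral>\<^sup>+ i. f i \<partial>count_space C)"
    by (intro nn_integral_mono) (auto split: split_indicator)
  finally show ?thesis .
qed

lemma emeasure_UN_le_countable:
  assumes C: "countable C" and A: "\<And>i. i \<in> C \<Longrightarrow> A i \<in> sets M"
  shows "emeasure M (\<Union>i\<in>C. A i) \<le> (\<integral>\<^sup>+ i. emeasure M (A i) \<partial>count_space C)"
proof -
  have U: "(\<Union>i\<in>C. A i) \<in> sets M" using A C by (intro sets.countable_UN') auto
  have "emeasure M (\<Union>i\<in>C. A i) = (\<integral>\<^sup>+ x. indicator (\<Union>i\<in>C. A i) x \<partial>M)"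
    using U by simp
  also have "\<dots> \<le> (\<integral>\<^sup>+ x. (\<integral>\<^sup>+ i. indicator (A i) x \<partial>count_space C) \<partial>M)"
  proof (intro nn_integral_mono)
    fix x
    show "indicator (\<Union>i\<in>C. A i) x \<le> (\<integral>\<^sup>+ i. indicator (A i) x \<partial>count_space C)"
    proof (cases "x \<in> (\<Union>i\<in>C. A i)")
      case True
      then obtain j where "j \<in> C" "x \<in> A j" by auto
      then show ?thesis using le_nn_integral_count_space[of j C "\<lambda>i. indicator (A i) x"] True by simp
    qed simp
  qed
  also have "\<dots> = (\<integral>\<^sup>+ i. (\<integral>\<^sup>+ x. indicator (A i) x \<partial>M) \<partial>count_space C)"
    using A C by (intro nn_integral_count_space_nn_integral) auto
  also have "\<dots> = (\<integral>\<^sup>+ i. emeasure M (A i) \<partial>count_space C)"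
    using A by (intro nn_integral_cong) auto
  finally show ?thesis .
qed

lemma radius_bound:
  fixes \<epsilon> X :: real
  assumes "0 < \<epsilon>" "\<epsilon> ^ n \<le> X" "n \<ge> 1"
  shows "\<epsilon> \<le> max 1 X"
proof (cases "\<epsilon> \<le> 1")
  case False
  then have "\<epsilon> ^ 1 \<le> \<epsilon> ^ n" using assms by (intro power_increasing) auto
  then show ?thesis using assms by simp
qed simp

lemma maximal_ineq:
  fixes r :: "'b::euclidean_space \<Rightarrow> ennreal"
  assumes r[measurable]: "r \<in> borel_measurable lborel" and s: "0 < s"
  shows "\<exists>T. open T \<and> {z. \<exists>\<epsilon>>0. ennreal s * emeasure lborel (ball z \<epsilon>) < (\<integral>\<^sup>+y. indicator (ball z \<epsilon>) y * r y \<partial>lborel)} \<subseteq> T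
     \<and> emeasure lborel T \<le> ennreal (5 ^ DIM('b) / s) * (\<integral>\<^sup>+y. r y \<partial>lborel)"
proof (cases "(\<integral>\<^sup>+y. r y \<partial>lborel) = \<infinity>")
  case True
  then show ?thesis using s by (intro exI[of _ UNIV]) (auto simp: ennreal_mult_top)
next
  case False
  have rb[measurable]: "r \<in> borel_measurable borel" using r by simp
  define I where "I = (\<integral>\<^sup>+y. r y \<partial>lborel)"
  define S where "S = {z. \<exists>\<epsilon>>0. ennreal s * emeasure lborel (ball z \<epsilon>) < (\<integral>\<^sup>+y. indicator (ball z \<epsilon>) y * r y \<partial>lborel)}"
  define K where "K = {(z,\<epsilon>). \<epsilon>>0 \<and> ennreal s * emeasure lborel (ball z \<epsilon>) < (\<integral>\<^sup>+y. indicator (ball z \<epsilon>) y * r y \<partial>lborel)}"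
  define c1 where "c1 = measure lborel (ball (0::'b) 1)"
  have c1: "c1 > 0" unfolding c1_def using content_ball_pos[of 1 "0::'b"] by simp
  have Ifin: "I < \<infinity>" using False by (simp add: I_def top.not_eq_extremum)
  define B where "B = max 1 (enn2real I / (s * c1))"
  have Kb: "0 < snd i \<and> snd i \<le> B" if "i \<in> K" for i
  proof -
    obtain z \<epsilon> where i: "i = (z,\<epsilon>)" by force
    have e: "\<epsilon> > 0" and lt: "ennreal s * emeasure lborel (ball z \<epsilon>) < (\<integral>\<^sup>+y. indicator (ball z \<epsilon>) y * r y \<partial>lborel)"
      using that by (auto simp: K_def i)
    have "(\<integral>\<^sup>+y. indicator (ball z \<epsilon>) y * r y \<partial>lborel) \<le> I"
      unfolding I_def by (intro nn_integral_mono) (auto split: split_indicator)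
    with lt have "ennreal s * ennreal (\<epsilon> ^ DIM('b) * c1) < I"
      using ball_lborel_conv[of \<epsilon> z] e by (simp add: c1_def)
    then have "ennreal (s * (\<epsilon> ^ DIM('b) * c1)) < ennreal (enn2real I)"
      using Ifin s e c1 by (simp add: ennreal_mult)
    then have "s * (\<epsilon> ^ DIM('b) * c1) < enn2real I"
      using s e c1 by (subst (asm) ennreal_less_iff) auto
    then have "\<epsilon> ^ DIM('b) \<le> enn2real I / (s * c1)"
      using s c1 by (simp add: field_simps)
    then have "\<epsilon> \<le> B" unfolding B_def using e by (intro radius_bound) (auto simp: DIM_positive Suc_leI)
    then show ?thesis using e i by simp
  qed
  have SK: "S \<subseteq> (\<Union>i\<in>K. ball (fst i) (snd i))"
    unfolding S_def K_def by force
  obtain C where C: "countable C" "C \<subseteq> K"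
    and pw: "pairwise (\<lambda>i j. disjnt (ball (fst i) (snd i)) (ball (fst j) (snd j))) C"
    and cov: "S \<subseteq> (\<Union>i\<in>C. ball (fst i) (5 * snd i))"
    using Vitali_covering_lemma_balls[OF SK, of B] Kb by blast
  define T where "T = (\<Union>i\<in>C. ball (fst i) (5 * snd i))"
  have "emeasure lborel T \<le> (\<integral>\<^sup>+ i. emeasure lborel (ball (fst i) (5 * snd i)) \<partial>count_space C)"
    unfolding T_def using C by (intro emeasure_UN_le_countable) auto
  also have "\<dots> = (\<integral>\<^sup>+ i. ennreal (5 ^ DIM('b)) * emeasure lborel (ball (fst i) (snd i)) \<partial>count_space C)"
  proof (intro nn_integral_cong)
    fix i assume "i \<in> space (count_space C)"
    then have "snd i > 0" using C Kb[of i] by auto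
    then show "emeasure lborel (ball (fst i) (5 * snd i)) = ennreal (5 ^ DIM('b)) * emeasure lborel (ball (fst i) (snd i))"
      using ball_lborel_conv[of "5 * snd i" "fst i"] ball_lborel_conv[of "snd i" "fst i"]
      by (simp add: ennreal_mult[symmetric] power_mult_distrib mult_ac)
  qed
  also have "\<dots> \<le> (\<integral>\<^sup>+ i. ennreal (5 ^ DIM('b) / s) * (\<integral>\<^sup>+y. indicator (ball (fst i) (snd i)) y * r y \<partial>lborel) \<partial>count_space C)"
  proof (intro nn_integral_mono)
    fix i assume "i \<in> space (count_space C)"
    then have "i \<in> K" using C by auto
    then have lt: "ennreal s * emeasure lborel (ball (fst i) (snd i)) < (\<integral>\<^sup>+y. indicator (ball (fst i) (snd i)) y * r y \<partial>lborel)"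
      by (auto simp: K_def split: prod.splits)
    have "ennreal (5 ^ DIM('b)) * emeasure lborel (ball (fst i) (snd i)) = ennreal (5 ^ DIM('b) / s) * (ennreal s * emeasure lborel (ball (fst i) (snd i)))"
      using s by (simp add: ennreal_mult[symmetric] mult.assoc[symmetric])
    also have "\<dots> \<le> ennreal (5 ^ DIM('b) / s) * (\<integral>\<^sup>+y. indicator (ball (fst i) (snd i)) y * r y \<partial>lborel)"
      using lt by (intro mult_left_mono) auto
    finally show "ennreal (5 ^ DIM('b)) * emeasure lborel (ball (fst i) (snd i)) \<le> ennreal (5 ^ DIM('b) / s) * (\<integral>\<^sup>+y. indicator (ball (fst i) (snd i)) y * r y \<partial>lborel)" .
  qed
  also have "\<dots> = ennreal (5 ^ DIM('b) / s) * (\<integral>\<^sup>+ i. (\<integral>\<^sup>+y. indicator (ball (fst i) (snd i)) y * r y \<partial>lborel) \<partial>count_space C)"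
    by (intro nn_integral_cmult) auto
  also have "(\<integral>\<^sup>+ i. (\<integral>\<^sup>+y. indicator (ball (fst i) (snd i)) y * r y \<partial>lborel) \<partial>count_space C)
      = (\<integral>\<^sup>+y. (\<integral>\<^sup>+ i. indicator (ball (fst i) (snd i)) y * r y \<partial>count_space C) \<partial>lborel)"
    using C rb by (intro nn_integral_count_space_nn_integral[symmetric]) auto
  also have "\<dots> \<le> (\<integral>\<^sup>+y. r y \<partial>lborel)"
  proof (intro nn_integral_mono)
    fix y
    have "(\<integral>\<^sup>+ i. indicator (ball (fst i) (snd i)) y * r y \<partial>count_space C)
        = (\<integral>\<^sup>+ i. of_bool (y \<in> ball (fst i) (snd i)) \<partial>count_space C) * r y"
      by (subst nn_integral_multc[symmetric]) (auto simp: indicator_def intro!: nn_integral_cong)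
    also have "(\<integral>\<^sup>+ i. of_bool (y \<in> ball (fst i) (snd i)) \<partial>count_space C) = of_bool (\<exists>i\<in>C. y \<in> ball (fst i) (snd i))"
    proof (intro of_bool_Bex_eq_nn_integral[symmetric])
      fix i j assume "i \<in> C" "j \<in> C" "y \<in> ball (fst i) (snd i)" "y \<in> ball (fst j) (snd j)"
      then show "i = j" using pw unfolding pairwise_def disjnt_def by blast
    qed
    finally show "(\<integral>\<^sup>+ i. indicator (ball (fst i) (snd i)) y * r y \<partial>count_space C) \<le> r y"
      by simp
  qed
  finally have fin: "(\<And>x y. x \<le> y \<Longrightarrow> ennreal (5 ^ DIM('b) / s) * x \<le> ennreal (5 ^ DIM('b) / s) * y)
     \<Longrightarrow> emeasure lborel T \<le> ennreal (5 ^ DIM('b) / s) * (\<integral>\<^sup>+y. r y \<partial>lborel)" .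
  have mono: "\<And>x y. x \<le> y \<Longrightarrow> ennreal (5 ^ DIM('b) / s) * x \<le> ennreal (5 ^ DIM('b) / s) * y"
    by (rule mult_left_mono) auto
  have "emeasure lborel T \<le> ennreal (5 ^ DIM('b) / s) * (\<integral>\<^sup>+y. r y \<partial>lborel)"
    by (rule fin) (rule mono)
  moreover have "open T" unfolding T_def by auto
  ultimately show ?thesis using cov unfolding S_def T_def by (intro exI[of _ T]) (simp add: T_def)
qed

lemma approx_indicator:
  fixes A :: "'a::euclidean_space set"
  assumes A: "A \<in> sets borel" "A \<subseteq> ball 0 R" and e: "e > 0"
  obtains u :: "'a \<Rightarrow> real" where "continuous_on UNIV u" "\<And>x. x \<notin> ball 0 R \<Longrightarrow> u x = 0"
    "\<And>x. 0 \<le> u x \<and> u x \<le> 1" "(\<integral>\<^sup>+x. ennreal \<bar>indicator A x - u x\<bar> \<partial>lborel) < ennreal e"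
proof -
  have e2: "e/2 > 0" using e by simp
  obtain O1 where O1: "open O1" "A \<subseteq> O1" "emeasure lborel (O1 - A) < e/2"
    using outer_regular_lborel[OF A(1) e2] by blast
  have cA: "-A \<in> sets borel" using A by auto
  obtain O2 where O2: "open O2" "-A \<subseteq> O2" "emeasure lborel (O2 - (-A)) < e/2"
    using outer_regular_lborel[OF cA e2] by blast
  define T where "T = -O2"
  define Op where "Op = O1 \<inter> ball 0 R"
  have T: "closed T" "T \<subseteq> A" using O2 by (auto simp: T_def)
  have Op: "open Op" "A \<subseteq> Op" using O1 A by (auto simp: Op_def)
  have cO: "closed (-Op)" using Op by auto
  have disj: "T \<inter> -Op = {}" using T Op by auto
  obtain u :: "'a \<Rightarrow> real" where u: "continuous_on UNIV u" "\<And>x. u x \<in> closed_segment 1 0"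
    "\<And>x. x \<in> T \<Longrightarrow> u x = 1" "\<And>x. x \<in> -Op \<Longrightarrow> u x = 0"
    using Urysohn[OF T(1) cO disj, of 1 0] by blast
  have u01: "0 \<le> u x \<and> u x \<le> 1" for x
    using u(2)[of x] by (auto simp: closed_segment_eq_real_ivl)
  have "(\<integral>\<^sup>+x. ennreal \<bar>indicator A x - u x\<bar> \<partial>lborel) \<le> (\<integral>\<^sup>+x. indicator ((O1 - A) \<union> (O2 - (-A))) x \<partial>lborel)"
  proof (intro nn_integral_mono)
    fix x
    show "ennreal \<bar>indicator A x - u x\<bar> \<le> indicator ((O1 - A) \<union> (O2 - (-A))) x"
    proof (cases "x \<in> T")
      case True
      then show ?thesis using u(3)[of x] T by (auto simp: indicator_def)
    next
      case False
      show ?thesis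
      proof (cases "x \<in> Op")
        case False
        then show ?thesis using u(4)[of x] Op by (auto simp: indicator_def)
      next
        case True
        then have "x \<in> (O1 - A) \<union> (O2 - (-A))" using \<open>x \<notin> T\<close> by (auto simp: T_def Op_def)
        then show ?thesis using u01[of x] by (auto simp: indicator_def)
      qed
    qed
  qed
  also have "\<dots> = emeasure lborel ((O1 - A) \<union> (O2 - (-A)))"
    using O1 O2 A by (intro nn_integral_indicator) auto
  also have "\<dots> \<le> emeasure lborel (O1 - A) + emeasure lborel (O2 - (-A))"
    using O1 O2 A by (intro emeasure_subadditive) auto
  also have "\<dots> < ennreal (e/2) + ennreal (e/2)"
    using O1(3) O2(3) by (rule add_strict_mono)
  also have "\<dots> = ennreal e" using e by (simp flip: ennreal_plus)
  finally have I: "(\<integral>\<^sup>+x. ennreal \<bar>indicator A x - u x\<bar> \<partial>lborel) < ennreal e" .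
  show ?thesis
  proof (rule that[OF u(1) _ u01 I])
    fix x :: 'a assume "x \<notin> ball 0 R" then show "u x = 0" using u(4) by (auto simp: Op_def)
  qed
qed

lemma approx_simple:
  fixes A :: "real \<Rightarrow> 'a::euclidean_space set"
  assumes F: "finite F" and A: "\<And>v. v \<in> F \<Longrightarrow> A v \<in> sets borel \<and> A v \<subseteq> ball 0 R"
  shows "e > 0 \<Longrightarrow> \<exists>h. continuous_on UNIV h \<and> (\<forall>x. x \<notin> ball 0 R \<longrightarrow> h x = 0) \<and>
     (\<integral>\<^sup>+x. ennreal \<bar>(\<Sum>v\<in>F. v * indicator (A v) x) - h x\<bar> \<partial>lborel) < ennreal e"
  using F A
proof (induction F arbitrary: e rule: finite_induct)
  case empty
  then show ?case by (intro exI[of _ "\<lambda>x. 0"]) auto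
next
  case (insert w F)
  have e2: "e/2 > 0" using insert by simp
  obtain h1 where h1: "continuous_on UNIV h1" "\<forall>x. x \<notin> ball 0 R \<longrightarrow> h1 x = 0"
    "(\<integral>\<^sup>+x. ennreal \<bar>(\<Sum>v\<in>F. v * indicator (A v) x) - h1 x\<bar> \<partial>lborel) < ennreal (e/2)"
    using insert.IH[OF e2] insert.prems by auto
  have e3: "e / 2 / (\<bar>w\<bar> + 1) > 0" using e2 by simp
  obtain u where u: "continuous_on UNIV u" "\<And>x. x \<notin> ball 0 R \<Longrightarrow> u x = 0"
    "\<And>x. 0 \<le> u x \<and> u x \<le> 1" "(\<integral>\<^sup>+x. ennreal \<bar>indicator (A w) x - u x\<bar> \<partial>lborel) < ennreal (e / 2 / (\<bar>w\<bar> + 1))"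
    using approx_indicator[of "A w" R "e / 2 / (\<bar>w\<bar> + 1)", OF _ _ e3] insert.prems by auto
  define h where "h x = h1 x + w * u x" for x
  have hc: "continuous_on UNIV h" unfolding h_def by (intro continuous_intros h1 u)
  have hz: "\<forall>x. x \<notin> ball 0 R \<longrightarrow> h x = 0" using h1 u by (simp add: h_def)
  have [measurable]: "h1 \<in> borel_measurable borel" "u \<in> borel_measurable borel"
    using h1(1) u(1) by (auto intro: borel_measurable_continuous_onI)
  have [measurable]: "\<And>v. v \<in> insert w F \<Longrightarrow> A v \<in> sets borel" using insert.prems by auto
  have "(\<integral>\<^sup>+x. ennreal \<bar>(\<Sum>v\<in>insert w F. v * indicator (A v) x) - h x\<bar> \<partial>lborel)
      \<le> (\<integral>\<^sup>+x. ennreal \<bar>(\<Sum>v\<in>F. v * indicator (A v) x) - h1 x\<bar> + ennreal \<bar>w\<bar> * ennreal \<bar>indicator (A w) x - u x\<bar> \<partial>lborel)"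
  proof (intro nn_integral_mono)
    fix x
    have "\<bar>(\<Sum>v\<in>insert w F. v * indicator (A v) x) - h x\<bar> = \<bar>((\<Sum>v\<in>F. v * indicator (A v) x) - h1 x) + w * (indicator (A w) x - u x)\<bar>"
      unfolding h_def sum.insert[OF insert.hyps] by (rule arg_cong[where f=abs]) algebra
    also have "\<dots> \<le> \<bar>(\<Sum>v\<in>F. v * indicator (A v) x) - h1 x\<bar> + \<bar>w\<bar> * \<bar>indicator (A w) x - u x\<bar>"
      by (metis abs_mult abs_triangle_ineq)
    finally show "ennreal \<bar>(\<Sum>v\<in>insert w F. v * indicator (A v) x) - h x\<bar>
      \<le> ennreal \<bar>(\<Sum>v\<in>F. v * indicator (A v) x) - h1 x\<bar> + ennreal \<bar>w\<bar> * ennreal \<bar>indicator (A w) x - u x\<bar>"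
      by (simp add: ennreal_mult[symmetric] ennreal_plus[symmetric] del: ennreal_plus)
  qed
  also have "\<dots> = (\<integral>\<^sup>+x. ennreal \<bar>(\<Sum>v\<in>F. v * indicator (A v) x) - h1 x\<bar> \<partial>lborel) + ennreal \<bar>w\<bar> * (\<integral>\<^sup>+x. ennreal \<bar>indicator (A w) x - u x\<bar> \<partial>lborel)"
    using insert.prems by (subst nn_integral_add) (auto simp: nn_integral_cmult)
  also have "\<dots> < ennreal (e/2) + ennreal \<bar>w\<bar> * ennreal (e / 2 / (\<bar>w\<bar> + 1))"
  proof -
    have "ennreal \<bar>w\<bar> * (\<integral>\<^sup>+x. ennreal \<bar>indicator (A w) x - u x\<bar> \<partial>lborel) \<le> ennreal \<bar>w\<bar> * ennreal (e / 2 / (\<bar>w\<bar> + 1))"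
      using u(4) by (intro mult_left_mono) auto
    then have "(\<integral>\<^sup>+x. ennreal \<bar>(\<Sum>v\<in>F. v * indicator (A v) x) - h1 x\<bar> \<partial>lborel) + ennreal \<bar>w\<bar> * (\<integral>\<^sup>+x. ennreal \<bar>indicator (A w) x - u x\<bar> \<partial>lborel)
       \<le> (\<integral>\<^sup>+x. ennreal \<bar>(\<Sum>v\<in>F. v * indicator (A v) x) - h1 x\<bar> \<partial>lborel) + ennreal \<bar>w\<bar> * ennreal (e / 2 / (\<bar>w\<bar> + 1))"
      by (rule add_left_mono)
    also have "\<dots> < ennreal (e/2) + ennreal \<bar>w\<bar> * ennreal (e / 2 / (\<bar>w\<bar> + 1))"
      using h1(3) ennreal_add_left_cancel_less[of "ennreal \<bar>w\<bar> * ennreal (e / 2 / (\<bar>w\<bar> + 1))"]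
      by (simp add: add.commute ennreal_mult_eq_top_iff)
    finally show ?thesis .
  qed
  also have "\<dots> \<le> ennreal e"
  proof -
    have q: "\<bar>w\<bar> / (\<bar>w\<bar>+1) \<le> 1" by simp
    have "\<bar>w\<bar> * (e / 2 / (\<bar>w\<bar> + 1)) = (e/2) * (\<bar>w\<bar> / (\<bar>w\<bar>+1))" by simp
    also have "\<dots> \<le> e/2" using q e2 by (intro mult_left_le) auto
    finally have "e/2 + \<bar>w\<bar> * (e / 2 / (\<bar>w\<bar> + 1)) \<le> e" by linarith
    then show ?thesis using e2
      by (simp add: ennreal_mult[symmetric] ennreal_plus[symmetric] del: ennreal_plus)
  qed
  finally show ?case using hc hz by blast
qed

lemma ennreal_cancel_less_aux:
  fixes X c d :: ennreal
  assumes "X + c < c + d" "c \<noteq> \<infinity>"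
  shows "X < d"
  using assms ennreal_add_left_cancel_less[of c X d] by (simp add: add.commute)

lemma approx_L1:
  fixes g :: "'a::euclidean_space \<Rightarrow> real"
  assumes g[measurable]: "g \<in> borel_measurable borel" and g0: "\<And>x. 0 \<le> g x"
    and gz: "\<And>x. x \<notin> ball 0 R \<Longrightarrow> g x = 0"
    and gi: "(\<integral>\<^sup>+x. ennreal (g x) \<partial>lborel) < \<infinity>" and e: "e > 0"
  shows "\<exists>h. continuous_on UNIV h \<and> (\<forall>x. x \<notin> ball 0 R \<longrightarrow> h x = 0) \<and>
     (\<integral>\<^sup>+x. ennreal \<bar>g x - h x\<bar> \<partial>lborel) < ennreal e"
proof -
  have e2: "e/2 > 0" using e by simp
  have um: "(\<lambda>x. ennreal (g x)) \<in> borel_measurable lborel" by simp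
  obtain f where f: "\<And>i. simple_function lborel (f i)" "incseq f" "\<And>i x. f i x < top"
    "\<And>x. (SUP i. f i x) = ennreal (g x)"
    using borel_measurable_implies_simple_function_sequence'[OF um] by blast
  have fm[measurable]: "f i \<in> borel_measurable borel" for i
    using borel_measurable_simple_function[OF f(1)[of i]] by simp
  have "(\<integral>\<^sup>+x. ennreal (g x) \<partial>lborel) = (SUP i. integral\<^sup>N lborel (f i))"
    using nn_integral_monotone_convergence_SUP[OF f(2), of lborel] f(4) by simp
  moreover have "(SUP i. integral\<^sup>N lborel (f i) + ennreal (e/2)) = (SUP i. integral\<^sup>N lborel (f i)) + ennreal (e/2)"
    by (rule ennreal_SUP_add_left) simp
  moreover have "(\<integral>\<^sup>+x. ennreal (g x) \<partial>lborel) + 0 < (\<integral>\<^sup>+x. ennreal (g x) \<partial>lborel) + ennreal (e/2)"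
    using gi e2 by (subst ennreal_add_left_cancel_less) auto
  ultimately have "(\<integral>\<^sup>+x. ennreal (g x) \<partial>lborel) < (SUP i. integral\<^sup>N lborel (f i) + ennreal (e/2))"
    by simp
  then obtain i where i: "(\<integral>\<^sup>+x. ennreal (g x) \<partial>lborel) < integral\<^sup>N lborel (f i) + ennreal (e/2)"
    by (auto simp: less_SUP_iff)
  define s where "s x = enn2real (f i x)" for x
  have fle: "f i x \<le> ennreal (g x)" for x
    using f(4)[of x] by (metis SUP_upper UNIV_I)
  have fs: "f i x = ennreal (s x)" for x
    using f(3)[of i x] by (simp add: s_def less_top)
  have s0: "0 \<le> s x" for x by (simp add: s_def)
  have sle: "s x \<le> g x" for x using fle[of x] fs[of x] g0[of x] by (simp add: ennreal_le_iff)
  have sz: "x \<notin> ball 0 R \<Longrightarrow> s x = 0" for x using sle[of x] s0[of x] gz[of x] by simp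
  have sm[measurable]: "s \<in> borel_measurable borel" unfolding s_def by measurable
  have "(\<integral>\<^sup>+x. ennreal (g x) \<partial>lborel) = (\<integral>\<^sup>+x. ennreal (g x - s x) + f i x \<partial>lborel)"
    using sle s0 by (intro nn_integral_cong) (simp add: fs ennreal_plus[symmetric] del: ennreal_plus)
  also have "\<dots> = (\<integral>\<^sup>+x. ennreal (g x - s x) \<partial>lborel) + integral\<^sup>N lborel (f i)"
    by (intro nn_integral_add) auto
  finally have "(\<integral>\<^sup>+x. ennreal (g x - s x) \<partial>lborel) + integral\<^sup>N lborel (f i) < integral\<^sup>N lborel (f i) + ennreal (e/2)"
    using i by simp
  moreover have "integral\<^sup>N lborel (f i) \<noteq> \<infinity>"
  proof -
    have "integral\<^sup>N lborel (f i) \<le> (\<integral>\<^sup>+x. ennreal (g x) \<partial>lborel)"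
      using fle by (intro nn_integral_mono) auto
    then show ?thesis using gi by (auto simp: top_unique)
  qed
  ultimately have gs: "(\<integral>\<^sup>+x. ennreal (g x - s x) \<partial>lborel) < ennreal (e/2)"
    by (rule ennreal_cancel_less_aux)
  define F where "F = s ` UNIV"
  have Ffin: "finite F"
  proof -
    have "finite (f i ` UNIV)" using simple_functionD(1)[OF f(1)[of i]] by simp
    then have "finite (enn2real ` f i ` UNIV)" by (rule finite_imageI)
    moreover have "F = enn2real ` f i ` UNIV" unfolding F_def s_def by auto
    ultimately show ?thesis by simp
  qed
  define A where "A v = {x. s x = v} \<inter> ball 0 R" for v
  have A: "A v \<in> sets borel \<and> A v \<subseteq> ball 0 R" for v
  proof -
    have "{x. s x = v} \<in> sets borel" using borel_measurable_vimage[OF sm, of v] by (simp add: vimage_def)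
    then show ?thesis unfolding A_def by auto
  qed
  have srep: "s x = (\<Sum>v\<in>F. v * indicator (A v) x)" for x
  proof -
    have "(\<Sum>v\<in>F. v * indicator (A v) x) = (\<Sum>v\<in>F. if v = s x then (if x \<in> ball 0 R then s x else 0) else 0)"
      by (intro sum.cong refl) (simp add: A_def indicator_def)
    also have "\<dots> = (if x \<in> ball 0 R then s x else 0)"
      by (subst sum.delta[OF Ffin]) (simp add: F_def)
    finally show ?thesis using sz[of x] by simp
  qed
  from approx_simple[OF Ffin A e2] obtain h where h0: "continuous_on UNIV h \<and> (\<forall>x. x \<notin> ball 0 R \<longrightarrow> h x = 0) \<and>
    (\<integral>\<^sup>+x. ennreal \<bar>(\<Sum>v\<in>F. v * indicator (A v) x) - h x\<bar> \<partial>lborel) < ennreal (e/2)" ..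
  note h = conjunct1[OF h0] conjunct1[OF conjunct2[OF h0]] conjunct2[OF conjunct2[OF h0]]
  have hm[measurable]: "h \<in> borel_measurable borel" using h(1) by (rule borel_measurable_continuous_onI)
  have "(\<integral>\<^sup>+x. ennreal \<bar>g x - h x\<bar> \<partial>lborel) \<le> (\<integral>\<^sup>+x. ennreal (g x - s x) + ennreal \<bar>s x - h x\<bar> \<partial>lborel)"
  proof (intro nn_integral_mono)
    fix x
    have "\<bar>g x - h x\<bar> \<le> (g x - s x) + \<bar>s x - h x\<bar>" using sle[of x] by linarith
    then show "ennreal \<bar>g x - h x\<bar> \<le> ennreal (g x - s x) + ennreal \<bar>s x - h x\<bar>"
      using sle[of x] by (simp add: ennreal_plus[symmetric] del: ennreal_plus)
  qed
  also have "\<dots> = (\<integral>\<^sup>+x. ennreal (g x - s x) \<partial>lborel) + (\<integral>\<^sup>+x. ennreal \<bar>s x - h x\<bar> \<partial>lborel)"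
    by (intro nn_integral_add) auto
  also have "\<dots> < ennreal (e/2) + ennreal (e/2)"
  proof (rule add_strict_mono[OF gs])
    have "(\<lambda>x. ennreal \<bar>s x - h x\<bar>) = (\<lambda>x. ennreal \<bar>(\<Sum>v\<in>F. v * indicator (A v) x) - h x\<bar>)"
      by (rule ext) (subst srep, rule refl)
    then show "(\<integral>\<^sup>+x. ennreal \<bar>s x - h x\<bar> \<partial>lborel) < ennreal (e/2)" using h(3) by simp
  qed
  also have "\<dots> = ennreal e" using e by (simp flip: ennreal_plus)
  finally show ?thesis using h(1,2) by blast
qed

lemma cont_slice:
  fixes h :: "'a::euclidean_space \<times> 'b::euclidean_space \<Rightarrow> real"
  assumes hc: "continuous_on UNIV h" and hz: "\<And>p. p \<notin> ball 0 R \<Longrightarrow> h p = 0" and eta: "\<eta> > 0"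
  shows "\<exists>d>0. \<forall>y. dist y z < d \<longrightarrow> (\<integral>\<^sup>+x. ennreal \<bar>h (x,y) - h (x,z)\<bar> \<partial>lborel) \<le> ennreal \<eta>"
proof -
  define S where "S = cball (0::'a \<times> 'b) (R + norm z + 1)"
  have "uniformly_continuous_on S h"
    unfolding S_def by (intro compact_uniformly_continuous continuous_on_subset[OF hc]) auto
  define c where "c = measure lborel (ball (0::'a) R)"
  have c0: "c \<ge> 0" by (simp add: c_def)
  have eta': "\<eta> / (c + 1) > 0" using eta c0 by simp
  obtain d0 where d0: "d0 > 0" and uc: "\<And>p q. p \<in> S \<Longrightarrow> q \<in> S \<Longrightarrow> dist q p < d0 \<Longrightarrow> dist (h q) (h p) < \<eta> / (c + 1)"
    using \<open>uniformly_continuous_on S h\<close>[unfolded uniformly_continuous_on_def, rule_format, OF eta'] by blast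
  define d where "d = min d0 1"
  have "\<forall>y. dist y z < d \<longrightarrow> (\<integral>\<^sup>+x. ennreal \<bar>h (x,y) - h (x,z)\<bar> \<partial>lborel) \<le> ennreal \<eta>"
  proof (intro allI impI)
    fix y assume y: "dist y z < d"
    have pt: "ennreal \<bar>h (x,y) - h (x,z)\<bar> \<le> ennreal (\<eta> / (c + 1)) * indicator (ball (0::'a) R) x" for x
    proof (cases "x \<in> ball 0 R")
      case False
      then have "(x,y) \<notin> ball 0 R" "(x,z) \<notin> ball 0 R"
        using norm_fst_le[of x y] norm_fst_le[of x z] by auto
      then show ?thesis using hz by simp
    next
      case True
      have ny: "norm y \<le> norm z + 1" using y norm_triangle_ineq2[of y z] by (auto simp: d_def dist_norm)
      have "norm (x,y) \<le> norm x + norm y" "norm (x,z) \<le> norm x + norm z" by (rule norm_Pair_le)+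
      then have "(x,y) \<in> S" "(x,z) \<in> S" using True ny by (auto simp: S_def)
      moreover have "dist (x,y) (x,z) < d0" using y by (simp add: dist_Pair_Pair d_def)
      ultimately have "dist (h (x,y)) (h (x,z)) < \<eta> / (c + 1)" using uc by blast
      then show ?thesis using True by (simp add: dist_real_def)
    qed
    have "(\<integral>\<^sup>+x. ennreal \<bar>h (x,y) - h (x,z)\<bar> \<partial>lborel) \<le> (\<integral>\<^sup>+x. ennreal (\<eta> / (c + 1)) * indicator (ball (0::'a) R) x \<partial>lborel)"
      by (intro nn_integral_mono pt)
    also have "\<dots> = ennreal (\<eta> / (c + 1)) * emeasure lborel (ball (0::'a) R)"
      by (simp add: nn_integral_cmult_indicator)
    also have "\<dots> = ennreal (\<eta> / (c + 1) * c)"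
      using emeasure_lborel_ball_finite[of "0::'a" R] eta c0
      by (subst ennreal_mult) (auto simp: c_def emeasure_eq_ennreal_measure)
    also have "\<dots> \<le> ennreal \<eta>"
    proof (intro ennreal_leI)
      have "\<eta> / (c + 1) * c = \<eta> * (c / (c + 1))" by simp
      also have "\<dots> \<le> \<eta> * 1" using c0 eta by (intro mult_left_mono) auto
      finally show "\<eta> / (c + 1) * c \<le> \<eta>" by simp
    qed
    finally show "(\<integral>\<^sup>+x. ennreal \<bar>h (x,y) - h (x,z)\<bar> \<partial>lborel) \<le> ennreal \<eta>" .
  qed
  moreover have "d > 0" using d0 by (simp add: d_def)
  ultimately show ?thesis by blast
qed

lemma null_if_small_covers:
  fixes S :: "'a::euclidean_space set"
  assumes "\<And>e. e > 0 \<Longrightarrow> \<exists>T\<in>sets lborel. S \<subseteq> T \<and> emeasure lborel T \<le> ennreal e"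
  shows "\<exists>N\<in>null_sets lborel. S \<subseteq> N"
proof -
  have "\<forall>n. \<exists>T\<in>sets lborel. S \<subseteq> T \<and> emeasure lborel T \<le> ennreal (1 / Suc n)"
    using assms by simp
  then obtain T where T: "\<And>n. T n \<in> sets lborel" "\<And>n. S \<subseteq> T n" "\<And>n. emeasure lborel (T n) \<le> ennreal (1 / Suc n)"
    by metis
  define N where "N = (\<Inter>n. T n)"
  have N: "N \<in> sets lborel" unfolding N_def using T(1) by auto
  have "emeasure lborel N \<le> 0"
  proof (rule ennreal_le_epsilon)
    fix e :: real assume e: "0 < e"
    obtain n where n: "inverse (real (Suc n)) < e" using reals_Archimedean[OF e] by blast
    have "emeasure lborel N \<le> emeasure lborel (T n)"
      using T(1) by (intro emeasure_mono) (auto simp: N_def)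
    also have "\<dots> \<le> ennreal (1 / Suc n)" by (rule T(3))
    also have "\<dots> \<le> ennreal e" using n by (intro ennreal_leI) (simp add: field_simps)
    finally show "emeasure lborel N \<le> 0 + ennreal e" by simp
  qed
  then have "N \<in> null_sets lborel" using N by (simp add: null_sets_def)
  moreover have "S \<subseteq> N" using T(2) by (auto simp: N_def)
  ultimately show ?thesis by blast
qed

lemma ennreal_small_inv:
  assumes "0 < (a::ennreal)" shows "\<exists>n. ennreal (1 / Suc n) < a"
proof (cases a)
  case (real r)
  then have "r > 0" using assms by auto
  then obtain n where "inverse (real (Suc n)) < r" using reals_Archimedean by blast
  then have "1 / real (Suc n) < r" by (simp add: inverse_eq_divide)
  then have "ennreal (1 / real (Suc n)) < ennreal r" using \<open>r > 0\<close> by (intro ennreal_lessI) auto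
  then show ?thesis using real by blast
next
  case top
  then show ?thesis by (intro exI[of _ 0]) simp
qed

lemma core:
  fixes g :: "'a::euclidean_space \<times> 'b::euclidean_space \<Rightarrow> real"
  assumes gm: "g \<in> borel_measurable borel" and g0: "\<And>p. 0 \<le> g p" and gz: "\<And>p. p \<notin> ball 0 R \<Longrightarrow> g p = 0"
    and gi: "(\<integral>\<^sup>+p. ennreal (g p) \<partial>lborel) < \<infinity>"
  shows "AE z in lborel. ((\<lambda>\<epsilon>. (\<integral>\<^sup>+y. indicator (ball z \<epsilon>) y * (\<integral>\<^sup>+x. ennreal \<bar>g (x,y) - g (x,z)\<bar> \<partial>lborel) \<partial>lborel)
       / emeasure lborel (ball z \<epsilon>)) \<longlongrightarrow> 0) (at_right 0)"
proof -
  have gm2[measurable]: "g \<in> borel_measurable (lborel \<Otimes>\<^sub>M lborel)" using gm by (simp add: lborel_prod)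
  define Dg where "Dg z y = (\<integral>\<^sup>+x. ennreal \<bar>g (x,y) - g (x,z)\<bar> \<partial>lborel)" for z y
  define bad where "bad t = {z. \<forall>\<delta>>0. \<exists>\<epsilon>. 0 < \<epsilon> \<and> \<epsilon> < \<delta> \<and>
     ennreal t * emeasure lborel (ball z \<epsilon>) < (\<integral>\<^sup>+y. indicator (ball z \<epsilon>) y * Dg z y \<partial>lborel)}" for t
  have badnull: "\<exists>N\<in>null_sets lborel. bad t \<subseteq> N" if t: "t > 0" for t
  proof (rule null_if_small_covers)
    fix e :: real assume e: "e > 0"
    define c where "c = 5 ^ DIM('b) / (t/3) + 3/t"
    have c: "c > 0" unfolding c_def using t by (intro add_pos_pos divide_pos_pos) auto
    define \<delta> where "\<delta> = e / c"
    have \<delta>: "\<delta> > 0" using e c by (simp add: \<delta>_def)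
    from approx_L1[OF gm g0 gz gi \<delta>] obtain h where h0: "continuous_on UNIV h \<and> (\<forall>p. p \<notin> ball 0 R \<longrightarrow> h p = 0) \<and>
       (\<integral>\<^sup>+p. ennreal \<bar>g p - h p\<bar> \<partial>lborel) < ennreal \<delta>" ..
    have hc: "continuous_on UNIV h" and hz: "\<And>p. p \<notin> ball 0 R \<Longrightarrow> h p = 0"
      and hi: "(\<integral>\<^sup>+p. ennreal \<bar>g p - h p\<bar> \<partial>lborel) < ennreal \<delta>" using h0 by auto
    have hm[measurable]: "h \<in> borel_measurable (lborel \<Otimes>\<^sub>M lborel)"
      using borel_measurable_continuous_onI[OF hc] by (simp add: lborel_prod)
    have hmb[measurable]: "h \<in> borel_measurable borel" using hc by (rule borel_measurable_continuous_onI)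
    have gmb[measurable]: "g \<in> borel_measurable borel" by (rule gm)
    have ghm: "(\<lambda>p. \<bar>g p - h p\<bar>) \<in> borel_measurable borel" by measurable
    define r where "r y = (\<integral>\<^sup>+x. ennreal \<bar>g (x,y) - h (x,y)\<bar> \<partial>lborel)" for y
    have rm[measurable]: "r \<in> borel_measurable lborel" unfolding r_def by measurable
    have ri: "(\<integral>\<^sup>+y. r y \<partial>lborel) = (\<integral>\<^sup>+p. ennreal \<bar>g p - h p\<bar> \<partial>lborel)"
      unfolding r_def using lborel_pair.nn_integral_snd[of "\<lambda>p. ennreal \<bar>g p - h p\<bar>"] ghm by (simp add: lborel_prod)
    have rI: "(\<integral>\<^sup>+y. r y \<partial>lborel) \<le> ennreal \<delta>" using ri hi by simp
    have t3: "t/3 > 0" using t by simp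
    obtain T1 where T1: "open T1"
      "{z. \<exists>\<epsilon>>0. ennreal (t/3) * emeasure lborel (ball z \<epsilon>) < (\<integral>\<^sup>+y. indicator (ball z \<epsilon>) y * r y \<partial>lborel)} \<subseteq> T1"
      "emeasure lborel T1 \<le> ennreal (5 ^ DIM('b) / (t/3)) * (\<integral>\<^sup>+y. r y \<partial>lborel)"
      using maximal_ineq[OF rm t3] by blast
    define T2 where "T2 = {z \<in> UNIV. 1 \<le> ennreal (3/t) * r z}"
    have T2: "emeasure lborel T2 \<le> ennreal (3/t) * (\<integral>\<^sup>+y. r y * indicator UNIV y \<partial>lborel)"
      unfolding T2_def by (intro nn_integral_Markov_inequality) auto
    have T1s: "T1 \<in> sets lborel" using T1(1) by simp
    have T2s: "T2 \<in> sets lborel" unfolding T2_def by measurable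
    have "emeasure lborel (T1 \<union> T2) \<le> emeasure lborel T1 + emeasure lborel T2"
      by (rule emeasure_subadditive[OF T1s T2s])
    also have "\<dots> \<le> ennreal (5 ^ DIM('b) / (t/3)) * ennreal \<delta> + ennreal (3/t) * ennreal \<delta>"
    proof (rule add_mono)
      show "emeasure lborel T1 \<le> ennreal (5 ^ DIM('b) / (t/3)) * ennreal \<delta>"
        using T1(3) rI by (elim order_trans) (intro mult_left_mono, auto)
      show "emeasure lborel T2 \<le> ennreal (3/t) * ennreal \<delta>"
        using T2 rI by (simp, elim order_trans) (intro mult_left_mono, auto)
    qed
    also have "\<dots> = ennreal (c * \<delta>)"
      using t \<delta> by (simp add: c_def distrib_right ennreal_mult[symmetric] ennreal_plus[symmetric] del: ennreal_plus)
    also have "c * \<delta> = e" using c by (simp add: \<delta>_def)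
    finally have meas: "emeasure lborel (T1 \<union> T2) \<le> ennreal e" .
    have "bad t \<subseteq> T1 \<union> T2"
    proof
      fix z assume zb: "z \<in> bad t"
      show "z \<in> T1 \<union> T2"
      proof (rule ccontr)
        assume nz: "z \<notin> T1 \<union> T2"
        then have rz: "ennreal (3/t) * r z < 1" by (auto simp: T2_def)
        have "r z = ennreal (t/3) * (ennreal (3/t) * r z)"
          using t by (simp add: mult.assoc[symmetric] ennreal_mult[symmetric])
        also have "\<dots> \<le> ennreal (t/3) * 1" using rz by (intro mult_left_mono) auto
        finally have rz': "r z \<le> ennreal (t/3)" by simp
        obtain d where d: "d > 0" "\<And>y. dist y z < d \<Longrightarrow> (\<integral>\<^sup>+x. ennreal \<bar>h (x,y) - h (x,z)\<bar> \<partial>lborel) \<le> ennreal (t/3)"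
          using cont_slice[OF hc hz t3, where z=z] by blast
        from zb d(1) obtain \<epsilon> where \<epsilon>: "0 < \<epsilon>" "\<epsilon> < d"
          "ennreal t * emeasure lborel (ball z \<epsilon>) < (\<integral>\<^sup>+y. indicator (ball z \<epsilon>) y * Dg z y \<partial>lborel)"
          unfolding bad_def by blast
        have nT1: "\<not> ennreal (t/3) * emeasure lborel (ball z \<epsilon>) < (\<integral>\<^sup>+y. indicator (ball z \<epsilon>) y * r y \<partial>lborel)"
          using nz T1(2) \<epsilon>(1) by blast
        have pt: "indicator (ball z \<epsilon>) y * Dg z y \<le> indicator (ball z \<epsilon>) y * r y + (ennreal (t/3) + r z) * indicator (ball z \<epsilon>) y" for y
        proof (cases "y \<in> ball z \<epsilon>")
          case True
          then have dy: "dist y z < d" using \<epsilon> by (simp add: dist_commute)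
          have "Dg z y \<le> (\<integral>\<^sup>+x. ennreal \<bar>g (x,y) - h (x,y)\<bar> + ennreal \<bar>h (x,y) - h (x,z)\<bar> + ennreal \<bar>g (x,z) - h (x,z)\<bar> \<partial>lborel)"
            unfolding Dg_def
          proof (intro nn_integral_mono)
            fix x
            have "\<bar>g (x,y) - g (x,z)\<bar> \<le> \<bar>g (x,y) - h (x,y)\<bar> + \<bar>h (x,y) - h (x,z)\<bar> + \<bar>g (x,z) - h (x,z)\<bar>" by linarith
            then show "ennreal \<bar>g (x,y) - g (x,z)\<bar> \<le> ennreal \<bar>g (x,y) - h (x,y)\<bar> + ennreal \<bar>h (x,y) - h (x,z)\<bar> + ennreal \<bar>g (x,z) - h (x,z)\<bar>"
              by (simp add: ennreal_plus[symmetric] del: ennreal_plus)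
          qed
          also have "\<dots> = r y + (\<integral>\<^sup>+x. ennreal \<bar>h (x,y) - h (x,z)\<bar> \<partial>lborel) + r z"
            unfolding r_def by (subst nn_integral_add, measurable, subst nn_integral_add, measurable)
          also have "\<dots> \<le> r y + ennreal (t/3) + r z" using d(2)[OF dy] by (intro add_mono) auto
          finally show ?thesis using True by (simp add: add.assoc)
        qed simp
        have "(\<integral>\<^sup>+y. indicator (ball z \<epsilon>) y * Dg z y \<partial>lborel)
           \<le> (\<integral>\<^sup>+y. indicator (ball z \<epsilon>) y * r y + (ennreal (t/3) + r z) * indicator (ball z \<epsilon>) y \<partial>lborel)"
          by (intro nn_integral_mono pt)
        also have "\<dots> = (\<integral>\<^sup>+y. indicator (ball z \<epsilon>) y * r y \<partial>lborel) + (ennreal (t/3) + r z) * emeasure lborel (ball z \<epsilon>)"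
          by (subst nn_integral_add) (auto simp: nn_integral_cmult_indicator)
        also have "\<dots> \<le> ennreal (t/3) * emeasure lborel (ball z \<epsilon>) + (ennreal (t/3) + ennreal (t/3)) * emeasure lborel (ball z \<epsilon>)"
          using nT1 rz' by (intro add_mono mult_right_mono) auto
        also have "\<dots> = ennreal t * emeasure lborel (ball z \<epsilon>)"
          using t by (simp add: distrib_right[symmetric] ennreal_plus[symmetric] del: ennreal_plus)
        finally show False using \<epsilon>(3) by simp
      qed
    qed
    moreover have "T1 \<union> T2 \<in> sets lborel" using T1s T2s by simp
    ultimately show "\<exists>T\<in>sets lborel. bad t \<subseteq> T \<and> emeasure lborel T \<le> ennreal e" using meas by blast
  qed
  then have "\<forall>n. \<exists>N\<in>null_sets lborel. bad (1 / Suc n) \<subseteq> N" by simp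
  then obtain N where N: "\<And>n. N n \<in> null_sets lborel" "\<And>n. bad (1 / Suc n) \<subseteq> N n" by metis
  show ?thesis
  proof (rule AE_I')
    show "(\<Union>n. N n) \<in> null_sets lborel" using N(1) by auto
    show "{z \<in> space lborel. \<not> ((\<lambda>\<epsilon>. (\<integral>\<^sup>+y. indicator (ball z \<epsilon>) y * (\<integral>\<^sup>+x. ennreal \<bar>g (x,y) - g (x,z)\<bar> \<partial>lborel) \<partial>lborel)
       / emeasure lborel (ball z \<epsilon>)) \<longlongrightarrow> 0) (at_right 0)} \<subseteq> (\<Union>n. N n)"
    proof (rule subsetI, rule ccontr)
      fix z assume z: "z \<in> {z \<in> space lborel. \<not> ((\<lambda>\<epsilon>. (\<integral>\<^sup>+y. indicator (ball z \<epsilon>) y * (\<integral>\<^sup>+x. ennreal \<bar>g (x,y) - g (x,z)\<bar> \<partial>lborel) \<partial>lborel)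
       / emeasure lborel (ball z \<epsilon>)) \<longlongrightarrow> 0) (at_right 0)}" and nN: "z \<notin> (\<Union>n. N n)"
      have good: "\<exists>\<delta>>0. \<forall>\<epsilon>. 0 < \<epsilon> \<and> \<epsilon> < \<delta> \<longrightarrow> (\<integral>\<^sup>+y. indicator (ball z \<epsilon>) y * Dg z y \<partial>lborel) \<le> ennreal (1 / Suc n) * emeasure lborel (ball z \<epsilon>)" for n
      proof -
        have "z \<notin> bad (1 / Suc n)" using nN N(2)[of n] by blast
        then show ?thesis unfolding bad_def by (auto simp: not_less) (metis not_less)
      qed
      have "((\<lambda>\<epsilon>. (\<integral>\<^sup>+y. indicator (ball z \<epsilon>) y * Dg z y \<partial>lborel) / emeasure lborel (ball z \<epsilon>)) \<longlongrightarrow> 0) (at_right 0)"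
      proof (rule order_tendstoI)
        fix a :: ennreal assume "a < 0" then show "eventually (\<lambda>x. a < (\<integral>\<^sup>+y. indicator (ball z x) y * Dg z y \<partial>lborel) / emeasure lborel (ball z x)) (at_right 0)"
          by simp
      next
        fix a :: ennreal assume a: "0 < a"
        obtain n where n: "ennreal (1 / Suc n) < a" using ennreal_small_inv[OF a] by blast
        obtain \<delta> where \<delta>: "\<delta> > 0" "\<And>\<epsilon>. 0 < \<epsilon> \<Longrightarrow> \<epsilon> < \<delta> \<Longrightarrow> (\<integral>\<^sup>+y. indicator (ball z \<epsilon>) y * Dg z y \<partial>lborel) \<le> ennreal (1 / Suc n) * emeasure lborel (ball z \<epsilon>)"
          using good[of n] by blast
        show "eventually (\<lambda>x. (\<integral>\<^sup>+y. indicator (ball z x) y * Dg z y \<partial>lborel) / emeasure lborel (ball z x) < a) (at_right 0)"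
          unfolding eventually_at_right_field
        proof (intro exI[of _ \<delta>] conjI allI impI)
          show "0 < \<delta>" by (rule \<delta>(1))
          fix \<epsilon> :: real assume e1: "0 < \<epsilon>" and e2: "\<epsilon> < \<delta>"
          have "(\<integral>\<^sup>+y. indicator (ball z \<epsilon>) y * Dg z y \<partial>lborel) / emeasure lborel (ball z \<epsilon>) \<le> ennreal (1 / Suc n)"
            using \<delta>(2)[OF e1 e2] ball_lborel_pos[OF e1, of z] by (intro divide_le_posI_ennreal) (auto simp: mult.commute)
          also have "\<dots> < a" by (rule n)
          finally show "(\<integral>\<^sup>+y. indicator (ball z \<epsilon>) y * Dg z y \<partial>lborel) / emeasure lborel (ball z \<epsilon>) < a" .
        qed
      qed
      then show False using z by (simp add: Dg_def)
    qed
  qed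
qed

lemma expneg_measurable[measurable]: "expneg \<in> borel_measurable borel"
  unfolding expneg_def by measurable

lemma expneg_top[simp]: "expneg \<infinity> = 0" by (simp add: expneg_def)

lemma ediff_ennreal:
  assumes "0 \<le> a" "0 \<le> b"
  shows "ediff (ennreal a) (ennreal b) = ennreal \<bar>a - b\<bar>"
proof (cases "a \<le> b")
  case True
  then show ?thesis using assms by (simp add: ediff_def ennreal_minus ennreal_neg)
next
  case False
  then show ?thesis using assms by (simp add: ediff_def ennreal_minus ennreal_neg)
qed

lemma usc_measurable:
  fixes \<phi> :: "'a::euclidean_space \<Rightarrow> ereal"
  assumes W: "open W" and usc: "usc_on W \<phi>"
  shows "(\<lambda>p. if p \<in> W then \<phi> p else \<infinity>) \<in> borel_measurable borel"
proof (rule borel_measurableI_less)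
  fix c :: ereal
  have op: "open {p \<in> W. \<phi> p < c}"
  proof (rule Topological_Spaces.openI)
    fix p assume p: "p \<in> {p \<in> W. \<phi> p < c}"
    then have pW: "p \<in> W" and pc: "\<phi> p < c" by auto
    have "\<forall>\<^sub>F q in at p within W. \<phi> q < c"
      using usc unfolding usc_on_def using pW pc by (elim ballE allE impE) auto
    then have "\<forall>\<^sub>F q in at p. \<phi> q < c" by (subst (asm) at_within_open[OF pW W])
    then obtain S where S: "open S" "p \<in> S" "\<And>q. q \<in> S \<Longrightarrow> q \<noteq> p \<Longrightarrow> \<phi> q < c"
      unfolding eventually_at_topological by blast
    show "\<exists>T. open T \<and> p \<in> T \<and> T \<subseteq> {p \<in> W. \<phi> p < c}"
      using S p W by (intro exI[of _ "S \<inter> W"]) auto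
  qed
  have eq: "{p \<in> space borel. (if p \<in> W then \<phi> p else \<infinity>) < c} = {p \<in> W. \<phi> p < c}"
    by (auto split: if_splits)
  show "{p \<in> space borel. (if p \<in> W then \<phi> p else \<infinity>) < c} \<in> sets borel"
    unfolding eq by (rule borel_open[OF op])
qed

definition Kset :: "'a::metric_space set \<Rightarrow> nat \<Rightarrow> 'a set" where
  "Kset W m = {x. 1 / Suc m \<le> infdist x (-W)}"

lemma Kset_sub: "Kset W m \<subseteq> W"
proof
  fix x assume "x \<in> Kset W m"
  then have "1 / Suc m \<le> infdist x (-W)" by (simp add: Kset_def)
  moreover have "0 < 1 / real (Suc m)" by simp
  ultimately show "x \<in> W" by (metis ComplI infdist_zero not_less)
qed

lemma Kset_closed: "closed (Kset W m)"
  unfolding Kset_def by (intro closed_Collect_le continuous_intros)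

lemma Kset_compact: fixes W :: "'a::heine_borel set" assumes "bounded W" shows "compact (Kset W m)"
proof -
  have "bounded (Kset W m)" by (rule bounded_subset[OF assms Kset_sub])
  then show ?thesis using Kset_closed[of W m] by (simp add: compact_eq_bounded_closed)
qed

lemma Kset_mono: "m \<le> m' \<Longrightarrow> Kset W m \<subseteq> Kset W m'"
proof
  fix x assume m: "m \<le> m'" and x: "x \<in> Kset W m"
  from x have "1 / Suc m \<le> infdist x (-W)" by (simp add: Kset_def)
  moreover have "1 / real (Suc m') \<le> 1 / real (Suc m)" using m by (intro divide_left_mono) auto
  ultimately show "x \<in> Kset W m'" by (simp add: Kset_def)
qed

lemma Kset_compact_sub:
  fixes W :: "'a::metric_space set"
  assumes W: "open W" "W \<noteq> UNIV" and Q: "compact Q" "Q \<subseteq> W"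
  shows "\<exists>m. Q \<subseteq> Kset W m"
proof (cases "Q = {}")
  case True then show ?thesis by auto
next
  case False
  have cont: "continuous_on Q (\<lambda>x. infdist x (-W))" by (intro continuous_intros)
  obtain x0 where x0: "x0 \<in> Q" "\<And>x. x \<in> Q \<Longrightarrow> infdist x0 (-W) \<le> infdist x (-W)"
    using continuous_attains_inf[OF Q(1) False cont] by blast
  have pos: "infdist x0 (-W) > 0"
    using W x0 Q by (intro infdist_pos_not_in_closed) auto
  obtain m where m: "inverse (real (Suc m)) < infdist x0 (-W)" using reals_Archimedean[OF pos] by blast
  have "Q \<subseteq> Kset W m"
  proof
    fix x assume "x \<in> Q"
    then have "1 / Suc m \<le> infdist x (-W)" using m x0(2)[of x] by (simp add: inverse_eq_divide)
    then show "x \<in> Kset W m" by (simp add: Kset_def)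
  qed
  then show ?thesis by blast
qed

lemma Kset_ball:
  fixes W :: "'a::metric_space set"
  assumes W: "open W" "W \<noteq> UNIV" and z: "z \<in> W"
  shows "\<exists>m \<epsilon>. \<epsilon> > 0 \<and> ball z \<epsilon> \<subseteq> Kset W m"
proof -
  have pos: "infdist z (-W) > 0"
    using W z by (intro infdist_pos_not_in_closed) auto
  define \<epsilon> where "\<epsilon> = infdist z (-W) / 2"
  have e: "\<epsilon> > 0" using pos by (simp add: \<epsilon>_def)
  obtain m where m: "inverse (real (Suc m)) < \<epsilon>" using reals_Archimedean[OF e] by blast
  have "ball z \<epsilon> \<subseteq> Kset W m"
  proof
    fix y assume "y \<in> ball z \<epsilon>"
    then have "dist z y < \<epsilon>" by simp
    moreover have "infdist z (-W) \<le> infdist y (-W) + dist z y" by (rule infdist_triangle)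
    ultimately have "\<epsilon> \<le> infdist y (-W)" by (simp add: \<epsilon>_def)
    then show "y \<in> Kset W m" using m by (simp add: Kset_def inverse_eq_divide)
  qed
  then show ?thesis using e by blast
qed

lemma ideal_compact:
  fixes S :: "'a::euclidean_space set"
  assumes ideal: "multiplier_ideal_trivial S \<phi>" and Fm: "F \<in> borel_measurable borel"
    and FS: "\<And>p. p \<in> S \<Longrightarrow> F p = expneg (\<phi> p)" and Q: "compact Q" "Q \<subseteq> S"
  shows "(\<integral>\<^sup>+p. indicator Q p * F p \<partial>lborel) < \<infinity>"
proof -
  have "\<forall>x\<in>S. \<exists>N. open N \<and> x \<in> N \<and> N \<subseteq> S \<and> (\<integral>\<^sup>+ y. indicator N y * expneg (\<phi> y) \<partial>lborel) < \<infinity>"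
    using ideal by (simp add: multiplier_ideal_trivial_def)
  then obtain N where N: "\<And>x. x \<in> S \<Longrightarrow> open (N x) \<and> x \<in> N x \<and> N x \<subseteq> S \<and> (\<integral>\<^sup>+ y. indicator (N x) y * expneg (\<phi> y) \<partial>lborel) < \<infinity>"
    by metis
  have opn: "\<And>x. x \<in> Q \<Longrightarrow> open (N x)" using N Q(2) by blast
  have cov: "Q \<subseteq> (\<Union>x\<in>Q. N x)" using N Q(2) by blast
  obtain C where C: "C \<subseteq> Q" "finite C" "Q \<subseteq> (\<Union>x\<in>C. N x)"
    using compactE_image[OF Q(1) opn cov] by metis
  have "(\<integral>\<^sup>+p. indicator Q p * F p \<partial>lborel) \<le> (\<integral>\<^sup>+p. (\<Sum>c\<in>C. indicator (N c) p * F p) \<partial>lborel)"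
  proof (intro nn_integral_mono)
    fix p
    show "indicator Q p * F p \<le> (\<Sum>c\<in>C. indicator (N c) p * F p)"
    proof (cases "p \<in> Q")
      case True
      then obtain c where c: "c \<in> C" "p \<in> N c" using C by blast
      have "indicator Q p * F p = indicator (N c) p * F p" using True c by simp
      also have "\<dots> \<le> (\<Sum>c\<in>C. indicator (N c) p * F p)"
        by (rule member_le_sum[OF c(1)]) (auto simp: C(2))
      finally show ?thesis .
    qed simp
  qed
  also have "\<dots> = (\<Sum>c\<in>C. (\<integral>\<^sup>+p. indicator (N c) p * F p \<partial>lborel))"
  proof (rule nn_integral_sum)
    fix c assume "c \<in> C"
    then have "open (N c)" using opn C by blast
    then show "(\<lambda>p. indicator (N c) p * F p) \<in> borel_measurable lborel"
    proof -
      have [measurable]: "N c \<in> sets borel" using \<open>open (N c)\<close> by (rule borel_open)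
      have [measurable]: "F \<in> borel_measurable borel" by (rule Fm)
      show ?thesis by simp
    qed
  qed
  also have "\<dots> < \<infinity>"
  proof -
    have "(\<integral>\<^sup>+p. indicator (N c) p * F p \<partial>lborel) \<noteq> \<infinity>" if c: "c \<in> C" for c
    proof -
      have cS: "c \<in> S" using c C Q(2) by blast
      have "(\<integral>\<^sup>+p. indicator (N c) p * F p \<partial>lborel) = (\<integral>\<^sup>+p. indicator (N c) p * expneg (\<phi> p) \<partial>lborel)"
      proof (intro nn_integral_cong)
        fix p show "indicator (N c) p * F p = indicator (N c) p * expneg (\<phi> p)"
          using N[OF cS] FS by (cases "p \<in> N c") auto
      qed
      then show ?thesis using N[OF cS] by (simp add: less_top)
    qed
    then show ?thesis using C(2) by (simp add: less_top)
  qed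
  finally show ?thesis .
qed

lemma ennreal_enn2real_le: "ennreal (enn2real x) \<le> x"
  by (cases x) auto

lemma slice1_meas:
  fixes f :: "'a::euclidean_space \<times> 'b::euclidean_space \<Rightarrow> 'c::topological_space"
  assumes "f \<in> borel_measurable borel"
  shows "(\<lambda>x. f (x, y)) \<in> borel_measurable lborel"
proof -
  have "(\<lambda>x::'a. (x, y)) \<in> borel_measurable borel"
    by (intro borel_measurable_continuous_onI continuous_intros)
  then have "(\<lambda>x. f (x, y)) \<in> borel_measurable borel"
    using measurable_compose[OF _ assms] by blast
  then show ?thesis by simp
qed

lemma slice1_meas_ind:
  fixes f :: "'a::euclidean_space \<times> 'b::euclidean_space \<Rightarrow> ennreal"
  assumes "f \<in> borel_measurable borel" "K \<in> sets borel"
  shows "(\<lambda>x. indicator K x * f (x, y)) \<in> borel_measurable lborel"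
proof -
  have [measurable]: "(\<lambda>x. f (x, y)) \<in> borel_measurable lborel" by (rule slice1_meas[OF assms(1)])
  have [measurable]: "K \<in> sets lborel" using assms(2) by simp
  show ?thesis by measurable
qed

lemma main_generic:
  fixes U :: "'a::euclidean_space set" and D :: "'b::euclidean_space set"
    and \<phi> :: "'a \<times> 'b \<Rightarrow> ereal"
  assumes U: "open U" "bounded U" and D: "open D" "bounded D"
    and usc: "usc_on (U \<times> D) \<phi>"
    and ideal: "multiplier_ideal_trivial (U \<times> D) \<phi>"
  shows "AE z'' in lborel. z'' \<in> D \<longrightarrow>
    (\<forall>V (P :: 'a \<times> 'b \<Rightarrow> real).
       rel_compact_open V U \<and> continuous_on (closure V \<times> D) P
       \<and> (\<forall>x\<in>closure V \<times> D. 0 \<le> P x) \<longrightarrow>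
       (\<integral>\<^sup>+ w'. indicator V w' * ennreal (P (w', z'')) * expneg (\<phi> (w', z'')) \<partial>lborel) < \<infinity>
       \<and> ((\<lambda>\<epsilon>. (\<integral>\<^sup>+ w''. indicator (ball z'' \<epsilon>) w'' *
               (\<integral>\<^sup>+ w'. indicator V w' * ennreal (P (w', w'')) *
                   ediff (expneg (\<phi> (w', w''))) (expneg (\<phi> (w', z''))) \<partial>lborel) \<partial>lborel)
             / emeasure lborel (ball z'' \<epsilon>))
           \<longlongrightarrow> 0) (at_right (0::real)))"
proof -
  have UD: "open (U \<times> D)" using U D by (simp add: open_Times)
  define F where "F p = (if p \<in> U \<times> D then expneg (\<phi> p) else 0)" for p
  have "(\<lambda>p. expneg (if p \<in> U \<times> D then \<phi> p else \<infinity>)) \<in> borel_measurable borel"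
    using measurable_compose[OF usc_measurable[OF UD usc] expneg_measurable] by simp
  moreover have "(\<lambda>p. expneg (if p \<in> U \<times> D then \<phi> p else \<infinity>)) = F"
    by (rule ext) (simp add: F_def)
  ultimately have Fm[measurable]: "F \<in> borel_measurable borel" by simp
  have F2[measurable]: "F \<in> borel_measurable (lborel \<Otimes>\<^sub>M lborel)" using Fm by (simp add: lborel_prod)
  have FUD: "F p = expneg (\<phi> p)" if "p \<in> U \<times> D" for p using that by (simp add: F_def)
  have Unu: "U \<noteq> UNIV" using U(2) not_bounded_UNIV by blast
  have Dnu: "D \<noteq> UNIV" using D(2) not_bounded_UNIV by blast
  define K where "K m = Kset U m" for m
  define L where "L m = Kset D m" for m
  have KU: "K m \<subseteq> U" and LD: "L m \<subseteq> D" for m by (simp_all add: K_def L_def Kset_sub)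
  have Kc: "compact (K m)" and Lc: "compact (L m)" for m
    using U D by (simp_all add: K_def L_def Kset_compact)
  have Km[measurable]: "K m \<in> sets borel" and Lm[measurable]: "L m \<in> sets borel" for m
    using Kc Lc by (simp_all add: borel_compact)
  define Q where "Q m = K m \<times> L m" for m
  have Qc: "compact (Q m)" for m using Kc Lc by (simp add: Q_def compact_Times)
  have QUD: "Q m \<subseteq> U \<times> D" for m using KU LD by (auto simp: Q_def)
  have Qm[measurable]: "Q m \<in> sets borel" for m using Qc by (simp add: borel_compact)
  have Qint: "(\<integral>\<^sup>+p. indicator (Q m) p * F p \<partial>lborel) < \<infinity>" for m
    by (rule ideal_compact[OF ideal Fm FUD Qc QUD])
  define g where "g m p = indicator (Q m) p * enn2real (F p)" for m p
  have gm[measurable]: "g m \<in> borel_measurable borel" for m unfolding g_def by measurable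
  have gm2[measurable]: "g m \<in> borel_measurable (lborel \<Otimes>\<^sub>M lborel)" for m using gm by (simp add: lborel_prod)
  have CL: "AE z in lborel. ((\<lambda>\<epsilon>. (\<integral>\<^sup>+y. indicator (ball z \<epsilon>) y * (\<integral>\<^sup>+x. ennreal \<bar>g m (x,y) - g m (x,z)\<bar> \<partial>lborel) \<partial>lborel)
       / emeasure lborel (ball z \<epsilon>)) \<longlongrightarrow> 0) (at_right 0)" for m
  proof -
    obtain R where R: "Q m \<subseteq> ball 0 R" using bounded_subset_ballD[OF compact_imp_bounded[OF Qc]] by blast
    show ?thesis
    proof (rule core[OF gm])
      show "0 \<le> g m p" for p by (simp add: g_def)
      show "p \<notin> ball 0 R \<Longrightarrow> g m p = 0" for p
      proof -
        assume "p \<notin> ball 0 R" then have "p \<notin> Q m" using R by blast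
        then show "g m p = 0" by (simp add: g_def)
      qed
      have "(\<integral>\<^sup>+p. ennreal (g m p) \<partial>lborel) \<le> (\<integral>\<^sup>+p. indicator (Q m) p * F p \<partial>lborel)"
        by (intro nn_integral_mono) (auto simp: g_def indicator_def ennreal_enn2real_le)
      then show "(\<integral>\<^sup>+p. ennreal (g m p) \<partial>lborel) < \<infinity>" using Qint[of m] by (rule le_less_trans)
    qed
  qed
  have fin: "AE y in lborel. y \<in> L m \<longrightarrow> (\<integral>\<^sup>+x. indicator (K m) x * F (x,y) \<partial>lborel) < \<infinity>" for m
  proof -
    have "(\<integral>\<^sup>+y. (\<integral>\<^sup>+x. indicator (Q m) (x,y) * F (x,y) \<partial>lborel) \<partial>lborel) = (\<integral>\<^sup>+p. indicator (Q m) p * F p \<partial>lborel)"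
      using lborel_pair.nn_integral_snd[of "\<lambda>p. indicator (Q m) p * F p"] by (simp add: lborel_prod)
    then have "(\<integral>\<^sup>+y. (\<integral>\<^sup>+x. indicator (Q m) (x,y) * F (x,y) \<partial>lborel) \<partial>lborel) \<noteq> \<infinity>"
      using Qint[of m] by simp
    then have "AE y in lborel. (\<integral>\<^sup>+x. indicator (Q m) (x,y) * F (x,y) \<partial>lborel) \<noteq> \<infinity>"
      by (intro nn_integral_PInf_AE) measurable
    then show ?thesis
    proof (rule eventually_mono)
      fix y assume y: "(\<integral>\<^sup>+x. indicator (Q m) (x,y) * F (x,y) \<partial>lborel) \<noteq> \<infinity>"
      show "y \<in> L m \<longrightarrow> (\<integral>\<^sup>+x. indicator (K m) x * F (x,y) \<partial>lborel) < \<infinity>"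
      proof
        assume yL: "y \<in> L m"
        have "(\<integral>\<^sup>+x. indicator (K m) x * F (x,y) \<partial>lborel) = (\<integral>\<^sup>+x. indicator (Q m) (x,y) * F (x,y) \<partial>lborel)"
          using yL by (intro nn_integral_cong) (simp add: Q_def indicator_def)
        then show "(\<integral>\<^sup>+x. indicator (K m) x * F (x,y) \<partial>lborel) < \<infinity>" using y by (simp add: less_top)
      qed
    qed
  qed
  have "AE z in lborel. \<forall>m. ((\<lambda>\<epsilon>. (\<integral>\<^sup>+y. indicator (ball z \<epsilon>) y * (\<integral>\<^sup>+x. ennreal \<bar>g m (x,y) - g m (x,z)\<bar> \<partial>lborel) \<partial>lborel)
       / emeasure lborel (ball z \<epsilon>)) \<longlongrightarrow> 0) (at_right 0) \<and> (z \<in> L m \<longrightarrow> (\<integral>\<^sup>+x. indicator (K m) x * F (x,z) \<partial>lborel) < \<infinity>)"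
    using CL fin by (simp add: AE_all_countable AE_conj_iff)
  then show ?thesis
  proof (rule eventually_mono)
    fix z assume Hz: "\<forall>m. ((\<lambda>\<epsilon>. (\<integral>\<^sup>+y. indicator (ball z \<epsilon>) y * (\<integral>\<^sup>+x. ennreal \<bar>g m (x,y) - g m (x,z)\<bar> \<partial>lborel) \<partial>lborel)
       / emeasure lborel (ball z \<epsilon>)) \<longlongrightarrow> 0) (at_right 0) \<and> (z \<in> L m \<longrightarrow> (\<integral>\<^sup>+x. indicator (K m) x * F (x,z) \<partial>lborel) < \<infinity>)"
    show "z \<in> D \<longrightarrow>
    (\<forall>V (P :: 'a \<times> 'b \<Rightarrow> real).
       rel_compact_open V U \<and> continuous_on (closure V \<times> D) P
       \<and> (\<forall>x\<in>closure V \<times> D. 0 \<le> P x) \<longrightarrow>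
       (\<integral>\<^sup>+ w'. indicator V w' * ennreal (P (w', z)) * expneg (\<phi> (w', z)) \<partial>lborel) < \<infinity>
       \<and> ((\<lambda>\<epsilon>. (\<integral>\<^sup>+ w''. indicator (ball z \<epsilon>) w'' *
               (\<integral>\<^sup>+ w'. indicator V w' * ennreal (P (w', w'')) *
                   ediff (expneg (\<phi> (w', w''))) (expneg (\<phi> (w', z))) \<partial>lborel) \<partial>lborel)
             / emeasure lborel (ball z \<epsilon>))
           \<longlongrightarrow> 0) (at_right (0::real)))"
    proof (intro impI allI)
      fix V and P :: "'a \<times> 'b \<Rightarrow> real"
      assume zD: "z \<in> D"
      assume VP: "rel_compact_open V U \<and> continuous_on (closure V \<times> D) P \<and> (\<forall>x\<in>closure V \<times> D. 0 \<le> P x)"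
      then have Vc: "compact (closure V)" "closure V \<subseteq> U" and Pc: "continuous_on (closure V \<times> D) P"
        and P0: "\<And>x. x \<in> closure V \<times> D \<Longrightarrow> 0 \<le> P x"
        by (auto simp: rel_compact_open_def)
      obtain m1 where m1: "closure V \<subseteq> K m1" using Kset_compact_sub[OF U(1) Unu Vc] by (auto simp: K_def)
      obtain m2 \<epsilon>1 where m2: "\<epsilon>1 > 0" "ball z \<epsilon>1 \<subseteq> L m2" using Kset_ball[OF D(1) Dnu zD] by (auto simp: L_def)
      define m where "m = max m1 m2"
      have VK: "closure V \<subseteq> K m" using m1 Kset_mono[of m1 m U] by (auto simp: K_def m_def)
      have BL: "ball z \<epsilon>1 \<subseteq> L m" using m2 Kset_mono[of m2 m D] by (auto simp: L_def m_def)
      have zL: "z \<in> L m" using BL m2(1) by auto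
      have Sc: "compact (closure V \<times> L m)" using Vc Lc by (simp add: compact_Times)
      have SP: "continuous_on (closure V \<times> L m) P" using LD[of m] by (intro continuous_on_subset[OF Pc]) auto
      obtain M where M: "M > 0" "\<And>p. p \<in> closure V \<times> L m \<Longrightarrow> norm (P p) \<le> M"
        using compact_imp_bounded[OF compact_continuous_image[OF SP Sc]] unfolding bounded_pos by auto
      have PM: "ennreal (P p) \<le> ennreal M" if "p \<in> closure V \<times> L m" for p
        using M(2)[OF that] by (intro ennreal_leI) auto
      have finz: "(\<integral>\<^sup>+x. indicator (K m) x * F (x,z) \<partial>lborel) < \<infinity>" using Hz zL by blast
      have CLz: "((\<lambda>\<epsilon>. (\<integral>\<^sup>+y. indicator (ball z \<epsilon>) y * (\<integral>\<^sup>+x. ennreal \<bar>g m (x,y) - g m (x,z)\<bar> \<partial>lborel) \<partial>lborel)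
       / emeasure lborel (ball z \<epsilon>)) \<longlongrightarrow> 0) (at_right 0)" using Hz by blast
      have part1: "(\<integral>\<^sup>+ w'. indicator V w' * ennreal (P (w', z)) * expneg (\<phi> (w', z)) \<partial>lborel) < \<infinity>"
      proof -
        have "(\<integral>\<^sup>+ w'. indicator V w' * ennreal (P (w', z)) * expneg (\<phi> (w', z)) \<partial>lborel)
            \<le> (\<integral>\<^sup>+x. ennreal M * (indicator (K m) x * F (x,z)) \<partial>lborel)"
        proof (intro nn_integral_mono)
          fix x
          show "indicator V x * ennreal (P (x, z)) * expneg (\<phi> (x, z)) \<le> ennreal M * (indicator (K m) x * F (x,z))"
          proof (cases "x \<in> V")
            case True
            then have xc: "x \<in> closure V" using closure_subset by blast
            then have xK: "x \<in> K m" using VK by blast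
            have "F (x,z) = expneg (\<phi> (x,z))" using xK KU zD by (intro FUD) auto
            moreover have "ennreal (P (x,z)) \<le> ennreal M" using xc zL by (intro PM) auto
            ultimately show ?thesis using True xK by (auto intro: mult_right_mono)
          qed simp
        qed
        also have "\<dots> = ennreal M * (\<integral>\<^sup>+x. indicator (K m) x * F (x,z) \<partial>lborel)"
          by (rule nn_integral_cmult) measurable
        also have "\<dots> < \<infinity>" using finz by (simp add: ennreal_mult_less_top)
        finally show ?thesis .
      qed
      have part2: "((\<lambda>\<epsilon>. (\<integral>\<^sup>+ w''. indicator (ball z \<epsilon>) w'' *
               (\<integral>\<^sup>+ w'. indicator V w' * ennreal (P (w', w'')) *
                   ediff (expneg (\<phi> (w', w''))) (expneg (\<phi> (w', z))) \<partial>lborel) \<partial>lborel)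
             / emeasure lborel (ball z \<epsilon>))
           \<longlongrightarrow> 0) (at_right (0::real))"
      proof -
        define IA where "IA y = (\<integral>\<^sup>+ w'. indicator V w' * ennreal (P (w', y)) *
                   ediff (expneg (\<phi> (w', y))) (expneg (\<phi> (w', z))) \<partial>lborel)" for y
        define IG where "IG y = (\<integral>\<^sup>+x. ennreal \<bar>g m (x,y) - g m (x,z)\<bar> \<partial>lborel)" for y
        have IGm[measurable]: "IG \<in> borel_measurable lborel" unfolding IG_def by measurable
        have AEK: "AE x in lborel. indicator (K m) x * F (x,y) \<noteq> \<infinity>"
          if "(\<integral>\<^sup>+x. indicator (K m) x * F (x,y) \<partial>lborel) < \<infinity>" for y
          using that slice1_meas_ind[OF Fm Km[of m], of y] by (intro nn_integral_PInf_AE) (auto simp: less_top)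
        have IAG: "IA y \<le> ennreal M * IG y"
          if yL: "y \<in> L m" and fy: "(\<integral>\<^sup>+x. indicator (K m) x * F (x,y) \<partial>lborel) < \<infinity>" for y
        proof -
          have "IA y \<le> (\<integral>\<^sup>+x. ennreal M * ennreal \<bar>g m (x,y) - g m (x,z)\<bar> \<partial>lborel)"
            unfolding IA_def
          proof (rule nn_integral_mono_AE)
            from AEK[OF fy] AEK[OF finz]
            show "AE x in lborel. indicator V x * ennreal (P (x, y)) * ediff (expneg (\<phi> (x, y))) (expneg (\<phi> (x, z)))
                \<le> ennreal M * ennreal \<bar>g m (x,y) - g m (x,z)\<bar>"
            proof (eventually_elim)
              case (elim x)
              show ?case
              proof (cases "x \<in> V")
                case True
                then have xc: "x \<in> closure V" using closure_subset by blast
                then have xK: "x \<in> K m" using VK by blast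
                have Qy: "(x,y) \<in> Q m" and Qz: "(x,z) \<in> Q m" using xK yL zL by (auto simp: Q_def)
                have Fy: "F (x,y) = expneg (\<phi> (x,y))" and Fz: "F (x,z) = expneg (\<phi> (x,z))"
                  using Qy Qz QUD by (auto intro!: FUD)
                have fy: "F (x,y) \<noteq> \<infinity>" and fz: "F (x,z) \<noteq> \<infinity>" using elim xK by auto
                have gy: "g m (x,y) = enn2real (F (x,y))" and gz: "g m (x,z) = enn2real (F (x,z))"
                  using Qy Qz by (simp_all add: g_def)
                have "ediff (expneg (\<phi> (x, y))) (expneg (\<phi> (x, z))) = ediff (ennreal (enn2real (F (x,y)))) (ennreal (enn2real (F (x,z))))"
                  using fy fz Fy Fz by (simp add: ennreal_enn2real_if)
                also have "\<dots> = ennreal \<bar>g m (x,y) - g m (x,z)\<bar>" using gy gz by (simp add: ediff_ennreal)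
                finally have ed: "ediff (expneg (\<phi> (x, y))) (expneg (\<phi> (x, z))) = ennreal \<bar>g m (x,y) - g m (x,z)\<bar>" .
                have "ennreal (P (x,y)) \<le> ennreal M" using xc yL by (intro PM) auto
                then show ?thesis using True ed by (auto intro: mult_right_mono)
              qed simp
            qed
          qed
          also have "\<dots> = ennreal M * IG y" unfolding IG_def by (rule nn_integral_cmult) measurable
          finally show ?thesis .
        qed
        have ev: "eventually (\<lambda>\<epsilon>. (\<integral>\<^sup>+ w''. indicator (ball z \<epsilon>) w'' * IA w'' \<partial>lborel) / emeasure lborel (ball z \<epsilon>)
            \<le> ennreal M * ((\<integral>\<^sup>+y. indicator (ball z \<epsilon>) y * IG y \<partial>lborel) / emeasure lborel (ball z \<epsilon>))) (at_right 0)"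
          unfolding eventually_at_right_field
        proof (intro exI[of _ \<epsilon>1] conjI allI impI)
          show "0 < \<epsilon>1" by (rule m2(1))
          fix \<epsilon> :: real assume e1: "0 < \<epsilon>" and e2: "\<epsilon> < \<epsilon>1"
          have "(\<integral>\<^sup>+ w''. indicator (ball z \<epsilon>) w'' * IA w'' \<partial>lborel) \<le> (\<integral>\<^sup>+ y. ennreal M * (indicator (ball z \<epsilon>) y * IG y) \<partial>lborel)"
          proof (rule nn_integral_mono_AE)
            show "AE y in lborel. indicator (ball z \<epsilon>) y * IA y \<le> ennreal M * (indicator (ball z \<epsilon>) y * IG y)"
              using fin[of m]
            proof (rule eventually_mono)
              fix y assume fy: "y \<in> L m \<longrightarrow> (\<integral>\<^sup>+x. indicator (K m) x * F (x,y) \<partial>lborel) < \<infinity>"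
              show "indicator (ball z \<epsilon>) y * IA y \<le> ennreal M * (indicator (ball z \<epsilon>) y * IG y)"
              proof (cases "y \<in> ball z \<epsilon>")
                case True
                then have yL: "y \<in> L m" using BL e2 by auto
                then show ?thesis using True IAG[OF yL] fy by simp
              qed simp
            qed
          qed
          also have "\<dots> = ennreal M * (\<integral>\<^sup>+ y. indicator (ball z \<epsilon>) y * IG y \<partial>lborel)"
            by (rule nn_integral_cmult) measurable
          finally have "(\<integral>\<^sup>+ w''. indicator (ball z \<epsilon>) w'' * IA w'' \<partial>lborel) / emeasure lborel (ball z \<epsilon>)
              \<le> ennreal M * (\<integral>\<^sup>+ y. indicator (ball z \<epsilon>) y * IG y \<partial>lborel) / emeasure lborel (ball z \<epsilon>)"
            by (rule divide_right_mono_ennreal)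
          then show "(\<integral>\<^sup>+ w''. indicator (ball z \<epsilon>) w'' * IA w'' \<partial>lborel) / emeasure lborel (ball z \<epsilon>)
            \<le> ennreal M * ((\<integral>\<^sup>+y. indicator (ball z \<epsilon>) y * IG y \<partial>lborel) / emeasure lborel (ball z \<epsilon>))"
            by (simp add: ennreal_times_divide)
        qed
        have lim: "((\<lambda>\<epsilon>. ennreal M * ((\<integral>\<^sup>+y. indicator (ball z \<epsilon>) y * IG y \<partial>lborel) / emeasure lborel (ball z \<epsilon>))) \<longlongrightarrow> ennreal M * 0) (at_right 0)"
          using CLz unfolding IG_def by (intro ennreal_tendsto_cmult) auto
        have "((\<lambda>\<epsilon>. (\<integral>\<^sup>+ w''. indicator (ball z \<epsilon>) w'' * IA w'' \<partial>lborel) / emeasure lborel (ball z \<epsilon>)) \<longlongrightarrow> 0) (at_right 0)"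
          by (rule tendsto_sandwich[OF _ ev tendsto_const]) (use lim in auto)
        then show ?thesis unfolding IA_def .
      qed
      show "(\<integral>\<^sup>+ w'. indicator V w' * ennreal (P (w', z)) * expneg (\<phi> (w', z)) \<partial>lborel) < \<infinity>
       \<and> ((\<lambda>\<epsilon>. (\<integral>\<^sup>+ w''. indicator (ball z \<epsilon>) w'' *
               (\<integral>\<^sup>+ w'. indicator V w' * ennreal (P (w', w'')) *
                   ediff (expneg (\<phi> (w', w''))) (expneg (\<phi> (w', z))) \<partial>lborel) \<partial>lborel)
             / emeasure lborel (ball z \<epsilon>))
           \<longlongrightarrow> 0) (at_right (0::real))" using part1 part2 by blast
    qed
  qed
qed

theorem lemma2p18:
  fixes U :: "(complex ^ 'p) set" and D :: "(complex ^ 'q) set"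
    and \<phi> :: "(complex ^ 'p) \<times> (complex ^ 'q) \<Rightarrow> ereal"
  assumes U: "open U" "connected U" "U \<noteq> {}" "bounded U"
    and D: "open D" "connected D" "D \<noteq> {}" "bounded D"
    and usc: "usc_on (U \<times> D) \<phi>"
    and not_pinf: "\<forall>x\<in>U \<times> D. \<phi> x < \<infinity>"
    and ideal: "multiplier_ideal_trivial (U \<times> D) \<phi>"
  shows "AE z'' in lborel. z'' \<in> D \<longrightarrow>
    (\<forall>V (P :: (complex ^ 'p) \<times> (complex ^ 'q) \<Rightarrow> real).
       rel_compact_open V U \<and> continuous_on (closure V \<times> D) P
       \<and> (\<forall>x\<in>closure V \<times> D. 0 \<le> P x) \<longrightarrow>
       (\<integral>\<^sup>+ w'. indicator V w' * ennreal (P (w', z'')) * expneg (\<phi> (w', z'')) \<partial>lborel) < \<infinity>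
       \<and> ((\<lambda>\<epsilon>. (\<integral>\<^sup>+ w''. indicator (ball z'' \<epsilon>) w'' *
               (\<integral>\<^sup>+ w'. indicator V w' * ennreal (P (w', w'')) *
                   ediff (expneg (\<phi> (w', w''))) (expneg (\<phi> (w', z''))) \<partial>lborel) \<partial>lborel)
             / emeasure lborel (ball z'' \<epsilon>))
           \<longlongrightarrow> 0) (at_right (0::real)))"
  using main_generic[OF U(1) U(4) D(1) D(4) usc ideal] .

end
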